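(* Assume (A1)–(A3) hold and let $\{x_k\}$ be an infinite sequence generated by LMLS. Then for all $k\ge0$: (i) $\{D_k\}$ is convergent and $\lim_{k\to\infty}D_k=\lim_{k\to\infty}\psi(x_k)$; (ii) $\nabla\psi(x_k)^Td_k\le -c_1\|\nabla\psi(x_k)\|^2$, where $c_1:=(L_0^2+\overline{\mu})^{-1}$ and $\overline{\mu}:=(\xi_{\max}+\omega_{\max}L_0^{\eta})\|h(x_0)\|^{\eta}$; (iii) LMLS either stops after finitely many iterations at an $x_k$ with $\|h(x_k)\|\le\varepsilon$ or $\|\nabla\psi(x_k)\|\le\varepsilon$, or generates an infinite sequence $\{x_k\}$ with $\lim_{k\to\infty}\|\nabla\psi(x_k)\|=0$, so that every accumulation point of $\{x_k\}$ is a stationary point of $\psi$.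
   Context: Let $h:\mathbb{R}^m\to\mathbb{R}^n$ be continuously differentiable; $\nabla h(x)\in\mathbb{R}^{m\times n}$ denotes the transposed Jacobian, $\|\cdot\|$ the Euclidean norm (operator norm for matrices), $\psi(x):=\frac12\|h(x)\|^2$, so $\nabla\psi(x)=\nabla h(x)h(x)$; $\Omega:=\{x:h(x)=0\}\neq\emptyset$; $\mathcal{L}(x_0):=\{x:\psi(x)\le\psi(x_0)\}$. Assumptions: (A1) for some $x^*\in\Omega$ there are $\delta\in\,]0,1]$, $\beta>0$, $\mathtt r\in\,]0,1[$ with $\beta\,\mathrm{dist}(x,\Omega)\le\|h(x)\|^\delta$ whenever $\|x-x^*\|\le\mathtt r$. (A2) $\mathcal{L}(x_0)$ is bounded. (A3) $\|\nabla h(x)-\nabla h(y)\|\le L\|x-y\|$ for all $x,y$. $L_0>0$ is a constant with $\|\nabla h(x)\|\le L_0$ on $\mathcal{L}(x_0)$. Algorithm LMLS: parameters $x_0$, $\varepsilon>0$, $\overline{\alpha}>0$, $\rho,\sigma\in\,]0,1[$, $\eta\in\,]0,4\delta[$, $0\le\xi_{\min}\le\xi_{\max}$, $0\le\omega_{\min}\le\omega_{\max}$ with $\xi_{\min}+\omega_{\min}>0$, $0\le\theta_{\min}\le\theta_{\max}<1$, sequences $\xi_k\in[\xi_{\min},\xi_{\max}]$, $\omega_k\in[\omega_{\min},\omega_{\max}]$, $\theta_k\in[\theta_{\min},\theta_{\max}]$; $D_0:=\psi(x_0)$. At iteration $k$: stop if $\|h(x_k)\|\le\varepsilon$ or $\|\nabla\psi(x_k)\|\le\varepsilon$;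 otherwise $\mu_k:=\xi_k\|h(x_k)\|^\eta+\omega_k\|\nabla h(x_k)h(x_k)\|^\eta$, $d_k$ solves $(\nabla h(x_k)\nabla h(x_k)^T+\mu_kI)d=-\nabla h(x_k)h(x_k)$, $\alpha_k:=\rho^{\ell_k}\overline{\alpha}$ with $\ell_k$ the smallest integer $\ell\ge0$ such that $\psi(x_k+\rho^\ell\overline{\alpha}d_k)\le D_k+\sigma\rho^\ell\overline{\alpha}\nabla\psi(x_k)^Td_k$, $x_{k+1}:=x_k+\alpha_kd_k$, $D_{k+1}:=(1-\theta_k)\psi(x_{k+1})+\theta_kD_k$. *)

theory Defs
  imports "HOL-Analysis.Analysis"
begin

definition mnorm :: "real^'a^'b \<Rightarrow> real" where
  "mnorm A = onorm (\<lambda>v. A *v v)"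

text \<open>Transposed Jacobian: nabla h(x) is the m x n matrix transpose (J x), where J x is the
  n x m Jacobian of h at x.\<close>
definition gradh :: "(real^'m::finite \<Rightarrow> real^'m^'n::finite) \<Rightarrow> real^'m \<Rightarrow> real^'n^'m" where
  "gradh J x = transpose (J x)"

definition psi :: "(real^'m \<Rightarrow> real^'n) \<Rightarrow> real^'m \<Rightarrow> real" where
  "psi h x = (1/2) * (norm (h x))^2"

definition gradpsi :: "(real^'m::finite \<Rightarrow> real^'n::finite) \<Rightarrow> (real^'m \<Rightarrow> real^'m^'n) \<Rightarrow> real^'m \<Rightarrow> real^'m" where
  "gradpsi h J x = gradh J x *v h x"

end

theory Submission
  imports Defs
begin

lemma gradpsi_cont:
  fixes h :: "real^'m::finite \<Rightarrow> real^'n::finite" and J :: "real^'m \<Rightarrow> real^'m^'n"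
  assumes deriv: "\<And>z. (h has_derivative (\<lambda>v. J z *v v)) (at z)"
    and contJ: "continuous_on UNIV J"
  shows "continuous_on UNIV (gradpsi h J)"
proof -
  have ch: "continuous_on UNIV h"
    using deriv has_derivative_continuous continuous_at_imp_continuous_on by blast
  have "gradpsi h J = (\<lambda>y. \<chi> j. \<Sum>i\<in>UNIV. h y $ i * J y $ i $ j)"
    by (simp add: fun_eq_iff gradpsi_def gradh_def vector_matrix_mult_def)
  moreover have "continuous_on UNIV (\<lambda>y. \<chi> j. \<Sum>i\<in>UNIV. h y $ i * J y $ i $ j)"
    by (intro continuous_on_vec_lambda continuous_on_sum continuous_on_mult continuous_on_component ch contJ)
  ultimately show ?thesis by simp
qed

lemma line_deriv:
  fixes h :: "real^'m::finite \<Rightarrow> real^'n::finite" and J :: "real^'m \<Rightarrow> real^'m^'n"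
  assumes deriv: "\<And>z. (h has_derivative (\<lambda>v. J z *v v)) (at z)"
  shows "((\<lambda>s. psi h (x + s *\<^sub>R d)) has_real_derivative (gradpsi h J (x + s *\<^sub>R d) \<bullet> d)) (at s)"
proof -
  have e: "(\<lambda>s. psi h (x + s *\<^sub>R d)) = (\<lambda>s. (1/2) * (h (x + s *\<^sub>R d) \<bullet> h (x + s *\<^sub>R d)))"
    by (simp add: fun_eq_iff psi_def power2_norm_eq_inner)
  have l: "((\<lambda>s. x + s *\<^sub>R d) has_derivative (\<lambda>t. t *\<^sub>R d)) (at s)"
    by (auto intro!: derivative_eq_intros)
  have c: "((\<lambda>s. h (x + s *\<^sub>R d)) has_derivative (\<lambda>t. J (x + s *\<^sub>R d) *v (t *\<^sub>R d))) (at s)"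
    using has_derivative_compose[OF l deriv] by simp
  have "((\<lambda>s. (1/2) * (h (x + s *\<^sub>R d) \<bullet> h (x + s *\<^sub>R d))) has_derivative
      (\<lambda>t. (1/2) * (h (x + s *\<^sub>R d) \<bullet> (J (x + s *\<^sub>R d) *v (t *\<^sub>R d)) + (J (x + s *\<^sub>R d) *v (t *\<^sub>R d)) \<bullet> h (x + s *\<^sub>R d)))) (at s)"
    using has_derivative_mult_right[OF has_derivative_inner[OF c c], of "1/2"] by simp
  moreover have "(\<lambda>t. (1/2) * (h (x + s *\<^sub>R d) \<bullet> (J (x + s *\<^sub>R d) *v (t *\<^sub>R d)) + (J (x + s *\<^sub>R d) *v (t *\<^sub>R d)) \<bullet> h (x + s *\<^sub>R d)))
     = (\<lambda>t. (gradpsi h J (x + s *\<^sub>R d) \<bullet> d) * t)"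
    apply (simp add: fun_eq_iff gradpsi_def gradh_def dot_lmul_matrix matrix_vector_mult_scaleR inner_commute algebra_simps)
    by (metis dot_lmul_matrix inner_commute)
  ultimately show ?thesis unfolding e has_field_derivative_def by simp
qed

lemma psi_mvt:
  fixes h :: "real^'m::finite \<Rightarrow> real^'n::finite" and J :: "real^'m \<Rightarrow> real^'m^'n"
  assumes deriv: "\<And>z. (h has_derivative (\<lambda>v. J z *v v)) (at z)" and t: "0 < t"
  shows "\<exists>z. 0 < z \<and> z < t \<and> psi h (x + t *\<^sub>R d) - psi h x = t * (gradpsi h J (x + z *\<^sub>R d) \<bullet> d)"
  using MVT2[OF t, of "\<lambda>s. psi h (x + s *\<^sub>R d)" "\<lambda>s. gradpsi h J (x + s *\<^sub>R d) \<bullet> d"]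
    line_deriv[OF deriv] by auto

lemma mnorm_bound:
  fixes G :: "real^'n::finite^'m::finite"
  shows "norm (G *v v) \<le> mnorm G * norm v"
  unfolding mnorm_def
  by (rule onorm) (simp add: linear_conv_bounded_linear)

lemma mat_mult_vec: "(mat mu :: real^'m::finite^'m) *v v = mu *\<^sub>R v"
  apply (vector matrix_vector_mult_def mat_def)
  apply (simp add: if_distrib if_distribR cong del: if_weak_cong)
  done

lemma lm_dir:
  fixes G :: "real^'n::finite^'m::finite" and d g :: "real^'m"
  assumes mu: "mu > 0" and eq: "(G ** transpose G + mat mu) *v d = - g"
  shows "g \<bullet> d \<le> - (norm g ^ 2 / (mnorm G ^ 2 + mu))" and "mu * norm d \<le> norm g"
proof -
  define w where "w = transpose G *v d"
  define M where "M = mnorm G"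
  have M0: "M \<ge> 0" unfolding M_def mnorm_def
    by (rule onorm_pos_le) (simp add: linear_conv_bounded_linear)
  have e1: "G *v w + mu *\<^sub>R d = - g"
    using eq by (simp add: w_def matrix_vector_mul_assoc[symmetric] mat_mult_vec
        matrix_vector_mult_add_rdistrib)
  have "g = - (G *v w + mu *\<^sub>R d)" using e1 by simp
  hence geq: "g = - (G *v w) - mu *\<^sub>R d" by simp
  have Gwd: "(G *v w) \<bullet> d = w \<bullet> w"
    by (metis dot_lmul_matrix vector_transpose_matrix w_def)
  have gd: "g \<bullet> d = - (w \<bullet> w) - mu * (d \<bullet> d)"
    by (simp add: geq inner_diff_left Gwd)
  have nGw: "norm (G *v w) \<le> M * norm w" unfolding M_def by (rule mnorm_bound)
  have "norm w ^ 2 = (G *v w) \<bullet> d" by (simp add: Gwd power2_norm_eq_inner)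
  also have "\<dots> \<le> norm (G *v w) * norm d" by (rule norm_cauchy_schwarz)
  also have "\<dots> \<le> M * norm w * norm d" by (simp add: mult_right_mono nGw)
  finally have "norm w ^ 2 \<le> M * norm w * norm d" .
  hence nw: "norm w \<le> M * norm d"
    using M0 by (cases "norm w = 0") (auto simp: power2_eq_square mult.commute)
  have nw2: "norm w ^ 2 \<le> M^2 * norm d ^ 2"
    using nw by (metis norm_ge_zero power_mono power_mult_distrib)
  have nGw2: "norm (G *v w) ^ 2 \<le> M^2 * norm w ^ 2"
    using nGw by (metis norm_ge_zero power_mono power_mult_distrib)
  have "norm g ^ 2 = norm (G *v w) ^ 2 + 2 * mu * ((G *v w) \<bullet> d) + mu^2 * norm d ^ 2"
    unfolding geq power2_norm_eq_inner
    by (simp add: inner_diff_left inner_diff_right inner_commute algebra_simps power2_eq_square)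
  also have "\<dots> \<le> M^2 * norm w ^ 2 + 2 * mu * norm w ^ 2 + mu^2 * norm d ^ 2"
    using nGw2 by (simp add: Gwd power2_norm_eq_inner)
  also have "\<dots> \<le> (M^2 + mu) * (norm w ^ 2 + mu * norm d ^ 2)"
  proof -
    have "mu * norm w ^ 2 \<le> mu * (M^2 * norm d ^ 2)" using nw2 mu by simp
    thus ?thesis by (simp add: algebra_simps power2_eq_square)
  qed
  finally have ng: "norm g ^ 2 \<le> (M^2 + mu) * (- (g \<bullet> d))"
    by (simp add: gd power2_norm_eq_inner add.commute)
  have pos: "M^2 + mu > 0" using mu by (simp add: add_nonneg_pos)
  show "g \<bullet> d \<le> - (norm g ^ 2 / (mnorm G ^ 2 + mu))"
    using ng pos unfolding M_def[symmetric] by (simp add: field_simps)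
  have "mu * norm d ^ 2 \<le> - (g \<bullet> d)" using gd by (simp add: power2_norm_eq_inner)
  also have "\<dots> \<le> norm g * norm d" using norm_cauchy_schwarz[of "-g" d] by simp
  finally have "mu * norm d ^ 2 \<le> norm g * norm d" .
  thus "mu * norm d \<le> norm g"
    by (cases "norm d = 0") (auto simp: power2_eq_square mult.commute)
qed

lemma armijo_exists:
  fixes h :: "real^'m::finite \<Rightarrow> real^'n::finite" and J :: "real^'m \<Rightarrow> real^'m^'n"
  assumes deriv: "\<And>z. (h has_derivative (\<lambda>v. J z *v v)) (at z)"
    and gpc: "continuous_on UNIV (gradpsi h J)"
    and gd: "gradpsi h J x \<bullet> d < 0" and sig: "sg < 1" and r: "0 < rho" "rho < 1" and ab: "abar > 0"
    and Dk: "psi h x \<le> Dk"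
  shows "\<exists>l. psi h (x + (rho ^ l * abar) *\<^sub>R d) \<le> Dk + sg * rho ^ l * abar * (gradpsi h J x \<bullet> d)"
proof -
  define f where "f s = gradpsi h J (x + s *\<^sub>R d) \<bullet> d" for s :: real
  have fc: "continuous_on UNIV f" unfolding f_def
    by (intro continuous_intros continuous_on_compose2[OF gpc]) auto
  have e: "(1 - sg) * (- (gradpsi h J x \<bullet> d)) > 0" using gd sig by (simp add: mult_pos_neg)
  obtain del where del: "del > 0" "\<And>s. dist s 0 < del \<Longrightarrow> dist (f s) (f 0) < (1 - sg) * (- (gradpsi h J x \<bullet> d))"
    using fc e unfolding continuous_on_iff by blast
  obtain l where l: "rho ^ l < del / abar" using real_arch_pow_inv[of "del / abar" rho] del ab r by auto
  define t where "t = rho ^ l * abar"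
  have t0: "t > 0" using r ab by (simp add: t_def)
  have tdel: "t < del" using l ab by (simp add: t_def field_simps)
  obtain z where z: "0 < z" "z < t" "psi h (x + t *\<^sub>R d) - psi h x = t * f z"
    using psi_mvt[OF deriv t0, of x d] unfolding f_def by blast
  have "dist (f z) (f 0) < (1 - sg) * (- (gradpsi h J x \<bullet> d))"
    using del(2)[of z] z tdel by (simp add: dist_real_def)
  hence "f z \<le> sg * (gradpsi h J x \<bullet> d)" by (simp add: f_def dist_real_def algebra_simps)
  hence tf: "t * f z \<le> t * (sg * (gradpsi h J x \<bullet> d))" using t0 by (simp add: mult_left_mono)
  have "psi h (x + t *\<^sub>R d) \<le> Dk + sg * t * (gradpsi h J x \<bullet> d)" using z(3) Dk tf by (simp add: algebra_simps)
  thus ?thesis unfolding t_def by (auto simp: mult.assoc)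
qed

theorem theorem1:
  fixes h :: "real^'m::finite \<Rightarrow> real^'n::finite"
    and J :: "real^'m \<Rightarrow> real^'m^'n"
    and x :: "nat \<Rightarrow> real^'m" and d :: "nat \<Rightarrow> real^'m"
    and D mu alpha :: "nat \<Rightarrow> real"
    and xi omega theta :: "nat \<Rightarrow> real"
    and eps abar rho sigma eta delta L L0 :: real
    and xi_min xi_max omega_min omega_max theta_min theta_max :: real
  assumes deriv: "\<And>z. (h has_derivative (\<lambda>v. J z *v v)) (at z)"
    and contJ: "continuous_on UNIV J"
    and Omega_ne: "{z. h z = 0} \<noteq> {}"
    and A1: "\<exists>xs beta r. h xs = 0 \<and> 0 < delta \<and> delta \<le> 1 \<and> beta > 0 \<and> 0 < r \<and> r < 1 \<and>
              (\<forall>z. norm (z - xs) \<le> r \<longrightarrow> beta * infdist z {y. h y = 0} \<le> norm (h z) powr delta)"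
    and A2: "bounded {z. psi h z \<le> psi h (x 0)}"
    and A3: "\<And>y z. mnorm (gradh J y - gradh J z) \<le> L * norm (y - z)"
    and L0: "L0 > 0" "\<And>z. psi h z \<le> psi h (x 0) \<Longrightarrow> mnorm (gradh J z) \<le> L0"
    and params: "eps > 0" "abar > 0" "0 < rho" "rho < 1" "0 < sigma" "sigma < 1"
      "0 < eta" "eta < 4 * delta"
      "0 \<le> xi_min" "xi_min \<le> xi_max" "0 \<le> omega_min" "omega_min \<le> omega_max"
      "xi_min + omega_min > 0" "0 \<le> theta_min" "theta_min \<le> theta_max" "theta_max < 1"
    and seqs: "\<And>k. xi_min \<le> xi k \<and> xi k \<le> xi_max"
      "\<And>k. omega_min \<le> omega k \<and> omega k \<le> omega_max"
      "\<And>k. theta_min \<le> theta k \<and> theta k \<le> theta_max"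
    and D0: "D 0 = psi h (x 0)"
    and step: "\<And>k. (\<forall>j\<le>k. \<not> (norm (h (x j)) \<le> eps \<or> norm (gradpsi h J (x j)) \<le> eps)) \<Longrightarrow>
        mu k = xi k * norm (h (x k)) powr eta + omega k * norm (gradpsi h J (x k)) powr eta
      \<and> (gradh J (x k) ** transpose (gradh J (x k)) + mat (mu k)) *v d k = - gradpsi h J (x k)
      \<and> alpha k = rho ^ (LEAST l. psi h (x k + (rho ^ l * abar) *\<^sub>R d k)
                        \<le> D k + sigma * rho ^ l * abar * (gradpsi h J (x k) \<bullet> d k)) * abar
      \<and> x (Suc k) = x k + alpha k *\<^sub>R d k
      \<and> D (Suc k) = (1 - theta k) * psi h (x (Suc k)) + theta k * D k"
  shows
    "((\<forall>k. \<not> (norm (h (x k)) \<le> eps \<or> norm (gradpsi h J (x k)) \<le> eps)) \<longrightarrow>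
        convergent D \<and> (\<lambda>k. psi h (x k)) \<longlonglongrightarrow> lim D)
   \<and> (\<forall>k. (\<forall>j\<le>k. \<not> (norm (h (x j)) \<le> eps \<or> norm (gradpsi h J (x j)) \<le> eps)) \<longrightarrow>
        gradpsi h J (x k) \<bullet> d k \<le>
          - (1 / (L0\<^sup>2 + (xi_max + omega_max * L0 powr eta) * norm (h (x 0)) powr eta))
            * (norm (gradpsi h J (x k)))\<^sup>2)
   \<and> ((\<exists>k. (\<forall>j<k. \<not> (norm (h (x j)) \<le> eps \<or> norm (gradpsi h J (x j)) \<le> eps))
            \<and> (norm (h (x k)) \<le> eps \<or> norm (gradpsi h J (x k)) \<le> eps))
      \<or> ((\<lambda>k. norm (gradpsi h J (x k))) \<longlonglongrightarrow> 0
         \<and> (\<forall>xb r. strict_mono r \<and> (x \<circ> r) \<longlonglongrightarrow> xb \<longrightarrow> gradpsi h J xb = 0)))"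
proof -
  define NS where "NS k \<longleftrightarrow> \<not> (norm (h (x k)) \<le> eps \<or> norm (gradpsi h J (x k)) \<le> eps)" for k
  define g where "g k = gradpsi h J (x k)" for k
  define mubar where "mubar = (xi_max + omega_max * L0 powr eta) * norm (h (x 0)) powr eta"
  define P where "P k l \<longleftrightarrow> psi h (x k + (rho ^ l * abar) *\<^sub>R d k) \<le> D k + sigma * rho ^ l * abar * (gradpsi h J (x k) \<bullet> d k)" for k l
  define mumin where "mumin = (xi_min + omega_min) * eps powr eta"
  have gpc: "continuous_on UNIV (gradpsi h J)" by (rule gradpsi_cont[OF deriv contJ])
  have stp: "mu k = xi k * norm (h (x k)) powr eta + omega k * norm (g k) powr eta"
     "(gradh J (x k) ** transpose (gradh J (x k)) + mat (mu k)) *v d k = - g k"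
     "alpha k = rho ^ (LEAST l. P k l) * abar"
     "x (Suc k) = x k + alpha k *\<^sub>R d k"
     "D (Suc k) = (1 - theta k) * psi h (x (Suc k)) + theta k * D k"
     if "\<forall>j\<le>k. NS j" for k
     using step[of k] that unfolding NS_def g_def P_def by blast+
  have mumin0: "mumin > 0" unfolding mumin_def using params by simp
  have mulow: "mu k \<ge> mumin" if ok: "\<forall>j\<le>k. NS j" for k
  proof -
    have n: "norm (h (x k)) > eps" "norm (g k) > eps" using ok unfolding NS_def g_def by auto
    have a: "norm (h (x k)) powr eta \<ge> eps powr eta" "norm (g k) powr eta \<ge> eps powr eta"
      using n params by (auto intro!: powr_mono2)
    have "xi k * eps powr eta \<le> xi k * norm (h (x k)) powr eta" using a seqs(1)[of k] params
      by (intro mult_left_mono) auto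
    moreover have "omega k * eps powr eta \<le> omega k * norm (g k) powr eta" using a seqs(2)[of k] params
      by (intro mult_left_mono) auto
    moreover have "xi_min * eps powr eta \<le> xi k * eps powr eta" using seqs(1)[of k]
      by (intro mult_right_mono) auto
    moreover have "omega_min * eps powr eta \<le> omega k * eps powr eta" using seqs(2)[of k]
      by (intro mult_right_mono) auto
    ultimately show ?thesis using stp(1)[OF ok] unfolding mumin_def by (simp add: algebra_simps)
  qed
  have mupos: "mu k > 0" if "\<forall>j\<le>k. NS j" for k using mulow[OF that] mumin0 by simp
  have M0: "0 \<le> mnorm (gradh J z)" for z unfolding mnorm_def
    by (rule onorm_pos_le) (simp add: linear_conv_bounded_linear)
  have dir: "g k \<bullet> d k \<le> - (norm (g k) ^ 2 / (mnorm (gradh J (x k)) ^ 2 + mu k))"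
      "mu k * norm (d k) \<le> norm (g k)" if "\<forall>j\<le>k. NS j" for k
    using lm_dir[OF mupos[OF that] stp(2)[OF that]] by auto
  have gneg: "g k \<bullet> d k < 0" if ok: "\<forall>j\<le>k. NS j" for k
  proof -
    have "norm (g k) > 0" using ok params unfolding NS_def g_def by auto
    hence "norm (g k) ^ 2 / (mnorm (gradh J (x k)) ^ 2 + mu k) > 0"
      using mupos[OF ok] M0 by (intro divide_pos_pos) (auto simp: add_nonneg_pos)
    thus ?thesis using dir(1)[OF ok] by linarith
  qed
  have ls: "P k (LEAST l. P k l)" if ok: "\<forall>j\<le>k. NS j" and Dk: "psi h (x k) \<le> D k" for k
  proof -
    have "\<exists>l. P k l" unfolding P_def
      using armijo_exists[OF deriv gpc _ params(6) params(3,4,2) Dk, of "d k"] gneg[OF ok]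
      unfolding g_def by auto
    thus ?thesis by (rule LeastI_ex)
  qed
  have alpha0: "alpha k > 0" if ok: "\<forall>j\<le>k. NS j" for k
    using stp(3)[OF ok] params by simp
  have armijo: "psi h (x (Suc k)) \<le> D k + sigma * alpha k * (g k \<bullet> d k)"
    if ok: "\<forall>j\<le>k. NS j" and Dk: "psi h (x k) \<le> D k" for k
    using ls[OF ok Dk] unfolding P_def stp(4)[OF ok] stp(3)[OF ok] g_def by (simp add: mult.assoc)
  have inv: "(\<forall>j<k. NS j) \<Longrightarrow> psi h (x k) \<le> D k \<and> D k \<le> psi h (x 0)" for k
  proof (induction k)
    case 0 then show ?case using D0 by simp
  next
    case (Suc k)
    have ok: "\<forall>j\<le>k. NS j" using Suc.prems by auto
    have IH: "psi h (x k) \<le> D k" "D k \<le> psi h (x 0)" using Suc.IH Suc.prems by auto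
    have "sigma * alpha k * (g k \<bullet> d k) \<le> 0"
      using alpha0[OF ok] gneg[OF ok] params by (simp add: mult_nonneg_nonpos)
    hence a: "psi h (x (Suc k)) \<le> D k" using armijo[OF ok IH(1)] by linarith
    have th: "0 \<le> theta k" "theta k < 1" using seqs(3)[of k] params by auto
    have "D (Suc k) \<ge> psi h (x (Suc k))"
    proof -
      have "theta k * psi h (x (Suc k)) \<le> theta k * D k" using a th by (simp add: mult_left_mono)
      thus ?thesis using stp(5)[OF ok] by (simp add: algebra_simps)
    qed
    moreover have "D (Suc k) \<le> D k"
    proof -
      have "(1 - theta k) * psi h (x (Suc k)) \<le> (1 - theta k) * D k" using a th by (simp add: mult_left_mono)
      thus ?thesis using stp(5)[OF ok] by (simp add: algebra_simps)
    qed
    ultimately show ?case using IH by simp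
  qed
  have lev: "psi h (x k) \<le> psi h (x 0)" "psi h (x k) \<le> D k" if ok: "\<forall>j\<le>k. NS j" for k
  proof -
    have "\<forall>j<k. NS j" using ok by simp
    thus "psi h (x k) \<le> psi h (x 0)" "psi h (x k) \<le> D k" using inv[of k] by simp_all
  qed
  have gb: "norm (g k) \<le> L0 * norm (h (x 0))" "norm (h (x k)) \<le> norm (h (x 0))"
    "mnorm (gradh J (x k)) \<le> L0" if ok: "\<forall>j\<le>k. NS j" for k
  proof -
    show M: "mnorm (gradh J (x k)) \<le> L0" by (rule L0(2)[OF lev(1)[OF ok]])
    have "norm (h (x k)) ^ 2 \<le> norm (h (x 0)) ^ 2" using lev(1)[OF ok] unfolding psi_def by simp
    then show hk: "norm (h (x k)) \<le> norm (h (x 0))" by (rule power2_le_imp_le) simp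
    have "norm (g k) \<le> mnorm (gradh J (x k)) * norm (h (x k))"
      unfolding g_def gradpsi_def by (rule mnorm_bound)
    also have "\<dots> \<le> L0 * norm (h (x 0))" by (rule mult_mono[OF M hk]) (use L0(1) in simp_all)
    finally show "norm (g k) \<le> L0 * norm (h (x 0))" .
  qed
  have partii: "g k \<bullet> d k \<le> - (1 / (L0\<^sup>2 + mubar)) * (norm (g k))\<^sup>2" if ok: "\<forall>j\<le>k. NS j" for k
  proof -
    have p1: "norm (h (x k)) powr eta \<le> norm (h (x 0)) powr eta"
      using gb(2)[OF ok] params by (intro powr_mono2) auto
    have "norm (g k) powr eta \<le> (L0 * norm (h (x 0))) powr eta"
      using gb(1)[OF ok] params by (intro powr_mono2) auto
    hence p2: "norm (g k) powr eta \<le> L0 powr eta * norm (h (x 0)) powr eta"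
      using L0(1) by (simp add: powr_mult)
    have "xi k * norm (h (x k)) powr eta \<le> xi_max * norm (h (x 0)) powr eta"
      by (rule mult_mono) (use p1 seqs(1)[of k] params in auto)
    moreover have "omega k * norm (g k) powr eta \<le> omega_max * (L0 powr eta * norm (h (x 0)) powr eta)"
      by (rule mult_mono) (use p2 seqs(2)[of k] params in auto)
    ultimately have mub: "mu k \<le> mubar" using stp(1)[OF ok] unfolding mubar_def by (simp add: algebra_simps)
    have "mnorm (gradh J (x k)) ^ 2 \<le> L0 ^ 2" by (rule power_mono) (use gb(3)[OF ok] M0 in auto)
    hence den: "mnorm (gradh J (x k)) ^ 2 + mu k \<le> L0 ^ 2 + mubar" using mub by simp
    have dpos: "mnorm (gradh J (x k)) ^ 2 + mu k > 0" using mupos[OF ok] by (simp add: add_nonneg_pos)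
    have "norm (g k) ^ 2 / (L0 ^ 2 + mubar) \<le> norm (g k) ^ 2 / (mnorm (gradh J (x k)) ^ 2 + mu k)"
      by (rule divide_left_mono) (use den dpos in auto)
    thus ?thesis using dir(1)[OF ok] by simp
  qed
  have noinf: False if all: "\<forall>k. NS k"
  proof -
    have ok: "\<forall>j\<le>k. NS j" for k using all by auto
    define H where "H = norm (h (x 0))"
    define dmax where "dmax = L0 * H / mumin"
    define c1 where "c1 = 1 / (L0\<^sup>2 + mubar)"
    have mubar0: "mubar \<ge> 0" unfolding mubar_def using params L0 by simp
    have c10: "c1 > 0" unfolding c1_def using mubar0 L0 by (simp add: add_pos_nonneg)
    have dmax0: "dmax \<ge> 0" unfolding dmax_def H_def using L0 mumin0 by simp
    have dk: "norm (d k) \<le> dmax" for k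
    proof -
      have "mumin * norm (d k) \<le> mu k * norm (d k)" using mulow[OF ok[of k]] by (simp add: mult_right_mono)
      also have "\<dots> \<le> L0 * H" using dir(2)[OF ok[of k]] gb(1)[OF ok[of k]] unfolding H_def by linarith
      finally show ?thesis unfolding dmax_def using mumin0 by (simp add: field_simps)
    qed
    have gdk: "g k \<bullet> d k \<le> - c1 * eps ^ 2" for k
    proof -
      have "eps ^ 2 \<le> norm (g k) ^ 2"
        by (rule power_mono) (use all[rule_format, of k] params in \<open>auto simp: NS_def g_def\<close>)
      hence "c1 * eps ^ 2 \<le> c1 * norm (g k) ^ 2" using c10 by simp
      thus ?thesis using partii[OF ok[of k]] unfolding c1_def by simp
    qed
    define C where "C = (1 - theta_max) * sigma * c1 * eps ^ 2"
    have C0: "C > 0" unfolding C_def using params c10 by simp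
    have Ddec: "D (Suc k) \<le> D k - C * alpha k" for k
    proof -
      define X where "X = sigma * alpha k * c1 * eps ^ 2"
      have X0: "X \<ge> 0" unfolding X_def using params alpha0[OF ok[of k]] c10 by (simp add: mult_nonneg_nonneg)
      have "sigma * alpha k * (g k \<bullet> d k) \<le> sigma * alpha k * (- c1 * eps ^ 2)"
        using gdk[of k] params alpha0[OF ok[of k]] by (intro mult_left_mono) auto
      hence a: "psi h (x (Suc k)) \<le> D k - X" using armijo[OF ok lev(2)[OF ok[of k]]] unfolding X_def by simp
      have th: "0 \<le> theta k" "theta k \<le> theta_max" using seqs(3)[of k] params by auto
      have "(1 - theta k) * psi h (x (Suc k)) \<le> (1 - theta k) * (D k - X)"
        using a th params by (intro mult_left_mono) auto
      moreover have "(1 - theta_max) * X \<le> (1 - theta k) * X" using th X0 by (intro mult_right_mono) auto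
      ultimately show ?thesis using stp(5)[OF ok[of k]] unfolding C_def X_def by (simp add: algebra_simps)
    qed
    have Dnn: "D k \<ge> 0" for k using lev(2)[OF ok[of k]] zero_le_power2[of "norm (h (x k))"] unfolding psi_def by linarith
    have small: "\<exists>k. alpha k < a0" if a0: "a0 > 0" for a0
    proof (rule ccontr)
      assume "\<not> ?thesis"
      hence ge: "alpha k \<ge> a0" for k using not_less by blast
      have Dk: "D k \<le> D 0 - real k * (C * a0)" for k
      proof (induction k)
        case 0 show ?case by simp
      next
        case (Suc k)
        have "C * a0 \<le> C * alpha k" using ge[of k] C0 by simp
        thus ?case using Ddec[of k] Suc.IH by (simp add: algebra_simps)
      qed
      obtain k where "D 0 < real k * (C * a0)" using ex_less_of_nat_mult[of "C * a0" "D 0"] C0 a0 by auto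
      thus False using Dk[of k] Dnn[of k] by simp
    qed
    obtain R0 where R0: "\<forall>z\<in>{z. psi h z \<le> psi h (x 0)}. norm z \<le> R0" using A2 unfolding bounded_iff by blast
    define S where "S = cball (0::real^'m) (R0 + abar / rho * dmax)"
    have uc: "uniformly_continuous_on S (gradpsi h J)"
      unfolding S_def by (rule compact_uniformly_continuous[OF continuous_on_subset[OF gpc] compact_cball]) simp
    define e0 where "e0 = (1 - sigma) * c1 * eps ^ 2 / (dmax + 1)"
    have e00: "e0 > 0" unfolding e0_def using params c10 dmax0 by simp
    obtain del where del: "del > 0" "\<And>a b. a \<in> S \<Longrightarrow> b \<in> S \<Longrightarrow> dist b a < del \<Longrightarrow> dist (gradpsi h J b) (gradpsi h J a) < e0"
      using uc e00 unfolding uniformly_continuous_on_def by metis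
    obtain k where ak: "alpha k < min abar (rho * del / (dmax + 1))"
      using small[of "min abar (rho * del / (dmax + 1))"] params del dmax0 by auto
    define L where "L = (LEAST l. P k l)"
    have aL: "alpha k = rho ^ L * abar" using stp(3)[OF ok[of k]] unfolding L_def .
    have L0': "L \<noteq> 0"
    proof
      assume "L = 0"
      with ak aL show False by simp
    qed
    have notP: "\<not> P k (L - 1)" unfolding L_def by (rule not_less_Least) (use L0' L_def in simp)
    define t where "t = rho ^ (L - 1) * abar"
    have t_alpha: "alpha k = rho * t" unfolding aL t_def using L0'
      by (metis Suc_pred' bot_nat_0.not_eq_extremum mult.assoc power_Suc)
    have t0: "t > 0" unfolding t_def using params by simp
    have "rho * (t * (dmax + 1)) < rho * del" using ak t_alpha params dmax0 by (simp add: field_simps)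
    hence tdel: "t * (dmax + 1) < del" using params by simp
    have tab: "t \<le> abar / rho" using ak t_alpha params by (simp add: field_simps)
    have np: "psi h (x k + t *\<^sub>R d k) > D k + sigma * t * (g k \<bullet> d k)"
      using notP unfolding P_def t_def g_def by (simp add: mult.assoc)
    obtain z where z: "0 < z" "z < t" "psi h (x k + t *\<^sub>R d k) - psi h (x k) = t * (gradpsi h J (x k + z *\<^sub>R d k) \<bullet> d k)"
      using psi_mvt[OF deriv t0] by blast
    define y where "y = x k + z *\<^sub>R d k"
    have "t * (gradpsi h J y \<bullet> d k) > t * (sigma * (g k \<bullet> d k))"
      using np z(3) lev(2)[OF ok[of k]] unfolding y_def by (simp add: algebra_simps)
    hence gy: "gradpsi h J y \<bullet> d k > sigma * (g k \<bullet> d k)" using t0 by simp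
    have xk: "norm (x k) \<le> R0" using R0 lev(1)[OF ok[of k]] by auto
    have zd: "z * norm (d k) \<le> t * dmax" by (rule mult_mono) (use z dk[of k] dmax0 in auto)
    have "t * dmax \<le> abar / rho * dmax" by (rule mult_right_mono[OF tab dmax0])
    hence "norm y \<le> R0 + abar / rho * dmax" unfolding y_def
      using xk zd z norm_triangle_ineq[of "x k" "z *\<^sub>R d k"] by simp
    hence yS: "y \<in> S" unfolding S_def by simp
    have "0 \<le> abar / rho * dmax" using params dmax0 by simp
    hence xS: "x k \<in> S" unfolding S_def using xk by simp
    have "dist y (x k) < del" unfolding y_def dist_norm using zd tdel z t0 by (simp add: algebra_simps)
    hence nd: "norm (gradpsi h J y - g k) < e0" using del(2)[OF xS yS] unfolding g_def dist_norm by simp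
    have "(gradpsi h J y - g k) \<bullet> d k \<le> norm (gradpsi h J y - g k) * norm (d k)" by (rule norm_cauchy_schwarz)
    also have "\<dots> \<le> e0 * norm (d k)" using nd by (simp add: mult_right_mono)
    also have "\<dots> \<le> e0 * dmax" using dk[of k] e00 by (simp add: mult_left_mono)
    also have "\<dots> < e0 * (dmax + 1)" using e00 by simp
    also have "\<dots> = (1 - sigma) * c1 * eps ^ 2" unfolding e0_def using dmax0 by simp
    finally have up: "(gradpsi h J y - g k) \<bullet> d k < (1 - sigma) * c1 * eps ^ 2" .
    have "(1 - sigma) * (c1 * eps ^ 2) \<le> (1 - sigma) * (- (g k \<bullet> d k))"
      using gdk[of k] params by (intro mult_left_mono) auto
    thus False using up gy by (simp add: inner_diff_left algebra_simps)
  qed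
  have p3: "(\<exists>k. (\<forall>j<k. NS j) \<and> \<not> NS k) \<or> ((\<lambda>k. norm (g k)) \<longlonglongrightarrow> 0
         \<and> (\<forall>xb r. strict_mono r \<and> (x \<circ> r) \<longlonglongrightarrow> xb \<longrightarrow> gradpsi h J xb = 0))"
  proof (cases "\<forall>k. NS k")
    case True then show ?thesis using noinf by blast
  next
    case False
    then obtain k0 where "\<not> NS k0" by auto
    define k where "k = (LEAST k. \<not> NS k)"
    have "\<not> NS k" unfolding k_def by (rule LeastI) fact
    moreover have "\<forall>j<k. NS j" unfolding k_def using not_less_Least by blast
    ultimately show ?thesis by blast
  qed
  have pA: "(\<forall>k. \<not> (norm (h (x k)) \<le> eps \<or> norm (gradpsi h J (x k)) \<le> eps)) \<longrightarrow>
        convergent D \<and> (\<lambda>k. psi h (x k)) \<longlonglongrightarrow> lim D"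
  proof
    assume "\<forall>k. \<not> (norm (h (x k)) \<le> eps \<or> norm (gradpsi h J (x k)) \<le> eps)"
    hence "\<forall>k. NS k" unfolding NS_def by simp
    thus "convergent D \<and> (\<lambda>k. psi h (x k)) \<longlonglongrightarrow> lim D" using noinf by simp
  qed
  have pB: "\<forall>k. (\<forall>j\<le>k. \<not> (norm (h (x j)) \<le> eps \<or> norm (gradpsi h J (x j)) \<le> eps)) \<longrightarrow>
        gradpsi h J (x k) \<bullet> d k \<le>
          - (1 / (L0\<^sup>2 + (xi_max + omega_max * L0 powr eta) * norm (h (x 0)) powr eta))
            * (norm (gradpsi h J (x k)))\<^sup>2"
  proof (intro allI impI)
    fix k
    assume "\<forall>j\<le>k. \<not> (norm (h (x j)) \<le> eps \<or> norm (gradpsi h J (x j)) \<le> eps)"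
    hence "\<forall>j\<le>k. NS j" unfolding NS_def by simp
    from partii[OF this] show "gradpsi h J (x k) \<bullet> d k \<le>
          - (1 / (L0\<^sup>2 + (xi_max + omega_max * L0 powr eta) * norm (h (x 0)) powr eta))
            * (norm (gradpsi h J (x k)))\<^sup>2" unfolding g_def mubar_def .
  qed
  have pC: "(\<exists>k. (\<forall>j<k. \<not> (norm (h (x j)) \<le> eps \<or> norm (gradpsi h J (x j)) \<le> eps))
            \<and> (norm (h (x k)) \<le> eps \<or> norm (gradpsi h J (x k)) \<le> eps))
      \<or> ((\<lambda>k. norm (gradpsi h J (x k))) \<longlonglongrightarrow> 0
         \<and> (\<forall>xb r. strict_mono r \<and> (x \<circ> r) \<longlonglongrightarrow> xb \<longrightarrow> gradpsi h J xb = 0))"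
    using p3 unfolding NS_def g_def by simp
  show ?thesis using pA pB pC by (intro conjI)
qed

end
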